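(* Let $f,g:\mathbb{R}\to\mathbb{R}$ be nonrandom continuous functions with $|f(u)|,|g(u)|\le1$ for all $u\in\mathbb{R}$, and let $\{\xi_n\}_{n\ge1}$ be random variables satisfying the noise assumption below. Suppose that $$\sup_{u\in\mathbb{R}\setminus\{0\}}\left\{\frac{2f(u)}{g^2(u)}\right\}=\beta<1,$$ where, at points $u\neq0$ with $g(u)=0$, this condition is understood to hold at $u$ if and only if $f(u)<0$ (so no restriction on $g$ is imposed when $f(u)<0$ for all $u\ne 0$). Then there exists $h_0>0$ such that for every $h\in(0,h_0)$ and every nonrandom $x_0\in\mathbb{R}$, the solution of $$x_{n+1}=x_n\big(1+hf(x_n)+\sqrt{h}\,g(x_n)\xi_{n+1}\big),\quad n=0,1,\dots,$$ satisfies $\lim_{n\to\infty}x_n=0$ almost surely.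
   Context: Noise assumption (Assumption 1): the $\xi_n$ are independent with $\mathbf{E}\xi_n=0$, $\mathbf{E}\xi_n^2=1$, $\mathbf{E}|\xi_n|^3$ uniformly bounded in $n$; each $\xi_n$ has a probability density $p_n$, and $x^3p_n(x)\to0$ as $|x|\to\infty$ uniformly in $n$. *)

theory Defs
  imports "HOL-Probability.Probability"
begin

fun xseq :: "(real \<Rightarrow> real) \<Rightarrow> (real \<Rightarrow> real) \<Rightarrow> (nat \<Rightarrow> 'a \<Rightarrow> real)
              \<Rightarrow> real \<Rightarrow> real \<Rightarrow> nat \<Rightarrow> 'a \<Rightarrow> real" where
  "xseq f g \<xi> h x0 0 \<omega> = x0"
| "xseq f g \<xi> h x0 (Suc n) \<omega> =
     xseq f g \<xi> h x0 n \<omega> * (1 + h * f (xseq f g \<xi> h x0 n \<omega>)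
        + sqrt h * g (xseq f g \<xi> h x0 n \<omega>) * \<xi> (Suc n) \<omega>)"

end

theory Submission
  imports Defs
begin


lemma taylor_pow:
  fixes d e :: real
  assumes d: "0 < d" "d \<le> 1/2" and e: "\<bar>e\<bar> \<le> 1/2"
  shows "(1 + e) powr d \<le> 1 + d * e - d * (1 - d) / 2 * e^2 + 3 * \<bar>e\<bar>^3"
proof (cases "e = 0")
  case True then show ?thesis by simp
next
  case False
  define diff where "diff = (\<lambda>m::nat. \<lambda>t::real. (\<Prod>j<m. (d - real j)) * (1 + t) powr (d - real m))"
  have D: "\<forall>m t. m < 3 \<and> -1/2 \<le> t \<and> t \<le> 1/2 \<longrightarrow> DERIV (diff m) t :> diff (Suc m) t"
  proof (intro allI impI)
    fix m :: nat and t :: real assume "m < 3 \<and> -1/2 \<le> t \<and> t \<le> 1/2"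
    then have t: "1 + t > 0" by auto
    have "DERIV (\<lambda>t. (1 + t) powr (d - real m)) t :> (d - real m) * (1 + t) powr (d - real m - of_nat 1) * 1"
      by (rule DERIV_fun_powr) (auto intro!: derivative_eq_intros t)
    then have "DERIV (\<lambda>t. (\<Prod>j<m. (d - real j)) * (1 + t) powr (d - real m)) t :>
       (\<Prod>j<m. (d - real j)) * ((d - real m) * (1 + t) powr (d - real m - of_nat 1) * 1)"
      by (rule DERIV_cmult)
    then show "DERIV (diff m) t :> diff (Suc m) t"
      unfolding diff_def by (simp add: algebra_simps)
  qed
  have d0: "diff 0 = (\<lambda>t. (1 + t) powr d)" by (simp add: diff_def)
  have eI: "-1/2 \<le> e" "e \<le> 1/2" using e by auto
  obtain t where t: "(if e < 0 then e < t \<and> t < 0 else 0 < t \<and> t < e)"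
    and eq: "(\<lambda>t. (1 + t) powr d) e = (\<Sum>m<3. (diff m 0 / fact m) * (e - 0)^m) + (diff 3 t / fact 3) * (e - 0)^3"
    using Taylor[of 3 diff "\<lambda>t. (1 + t) powr d" "-1/2" "1/2" 0 e, OF _ d0 D _ _ eI False]
    by auto
  have tb: "\<bar>t\<bar> \<le> 1/2" using t e by (auto split: if_splits)
  have sum: "(\<Sum>m<3. (diff m 0 / fact m) * (e - 0)^m) = 1 + d * e + d * (d - 1) / 2 * e^2"
    by (simp add: diff_def numeral_3_eq_3 fact_numeral lessThan_Suc eval_nat_numeral)
  have d3: "diff 3 t = d * (d - 1) * (d - 2) * (1 + t) powr (d - 3)"
    by (simp add: diff_def numeral_3_eq_3 lessThan_Suc)
  have p1: "(1 + t) powr (d - 3) \<le> (1/2) powr (d - 3)"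
    using tb d by (intro powr_mono2') auto
  have p2: "(1/2::real) powr (d - 3) \<le> (1/2) powr (- 3)"
    using d by (intro powr_mono') auto
  have "(1/2::real) powr (- 3) = 8" by (simp add: powr_minus_divide powr_realpow power_divide)
  then have pb: "0 \<le> (1 + t) powr (d - 3)" "(1 + t) powr (d - 3) \<le> 8" using p1 p2 by auto
  have cb: "\<bar>d * (d - 1) * (d - 2)\<bar> \<le> 2"
  proof -
    have "\<bar>d * (d - 1) * (d - 2)\<bar> = d * (1 - d) * (2 - d)" using d by (simp add: abs_mult)
    also have "\<dots> \<le> 1 * 1 * 2" using d by (intro mult_mono) auto
    finally show ?thesis by simp
  qed
  have "\<bar>diff 3 t\<bar> \<le> 16" unfolding d3 abs_mult[of _ "(1 + t) powr (d - 3)"]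
    using mult_mono[OF cb, of "\<bar>(1 + t) powr (d - 3)\<bar>" 8] pb by auto
  then have "\<bar>diff 3 t / fact 3 * e^3\<bar> \<le> 16 / 6 * \<bar>e\<bar>^3"
    by (simp add: fact_numeral abs_mult power_abs mult_right_mono)
  then have "diff 3 t / fact 3 * e^3 \<le> 3 * \<bar>e\<bar>^3" 
    using abs_ge_self[of "diff 3 t / fact 3 * e^3"] zero_le_power_abs[of e 3] by linarith
  moreover have "(1 + e) powr d = 1 + d * e + d * (d - 1) / 2 * e^2 + diff 3 t / fact 3 * e^3"
    using eq sum by simp
  moreover have "d * (d - 1) / 2 * e^2 = - (d * (1 - d) / 2 * e^2)" by (simp add: field_simps)
  ultimately show ?thesis by linarith
qed

lemma powr_le_max: fixes x d :: real assumes "0 \<le> x" "0 \<le> d" "d \<le> 1"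
  shows "x powr d \<le> 1 + x"
proof (cases "x \<le> 1")
  case True then have "x powr d \<le> 1" using assms powr_mono2[of d x 1] by simp
  then show ?thesis using assms by linarith
next
  case False then have "x powr d \<le> x powr 1" using assms by (intro powr_mono) auto
  then show ?thesis using False by simp
qed

lemma pow_ineq:
  fixes d e :: real
  assumes d: "0 < d" "d \<le> 1/2"
  shows "\<bar>1 + e\<bar> powr d \<le> 1 + d * e - d * (1 - d) / 2 * e^2 + 12 * \<bar>e\<bar>^3"
proof (cases "\<bar>e\<bar> \<le> 1/2")
  case True
  then have "\<bar>1 + e\<bar> = 1 + e" by auto
  moreover have "0 \<le> \<bar>e\<bar>^3" by simp
  ultimately show ?thesis using taylor_pow[OF d True] by (simp only:)
next
  case False
  have a: "\<bar>1 + e\<bar> powr d \<le> 1 + \<bar>e\<bar>"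
  proof (cases "\<bar>1 + e\<bar> \<le> 1")
    case True then have "\<bar>1 + e\<bar> powr d \<le> 1" using d powr_mono2[of d "\<bar>1 + e\<bar>" 1] by simp
    then show ?thesis by linarith
  next
    case False then have "\<bar>1 + e\<bar> powr d \<le> \<bar>1 + e\<bar> powr 1" using d by (intro powr_mono) auto
    then show ?thesis using False by simp
  qed
  have b0: "d * (1 - d) / 2 \<le> 1" using d mult_mono[of d 1 "1 - d" 1] by auto
  have b: "d * (1 - d) / 2 * e^2 \<le> e^2" using mult_right_mono[OF b0, of "e^2"] by simp
  have c: "\<bar>d * e\<bar> \<le> \<bar>e\<bar>" using d by (simp add: abs_mult mult_left_le_one_le)
  have e2: "e^2 = \<bar>e\<bar>^2" by simp
  have "2 * \<bar>e\<bar> + \<bar>e\<bar>^2 \<le> 12 * \<bar>e\<bar>^3"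
  proof -
    let ?x = "\<bar>e\<bar>"
    have x: "?x > 1/2" using False by auto
    have "?x * (1/2) \<le> ?x * ?x" using x by (intro mult_left_mono) auto
    then have "2 + ?x \<le> 12 * ?x^2" using x by (simp add: power2_eq_square)
    then have "?x * (2 + ?x) \<le> ?x * (12 * ?x^2)" using x by (intro mult_left_mono) auto
    then show ?thesis by (simp add: algebra_simps power2_eq_square power3_eq_cube)
  qed
  then show ?thesis using a b c e2 abs_ge_self[of "d*e"] abs_ge_minus_self[of "d*e"] by linarith
qed

lemma cube_sum: fixes x y :: real assumes "0 \<le> x" "0 \<le> y"
  shows "(x + y)^3 \<le> 4 * (x^3 + y^3)"
proof -
  have "4 * (x^3 + y^3) - (x + y)^3 = 3 * (x + y) * (x - y)^2"
    by (simp add: algebra_simps power2_eq_square power3_eq_cube)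
  also have "\<dots> \<ge> 0" using assms by auto
  finally show ?thesis by simp
qed

lemma pow_ineq2:
  fixes d a b t :: real
  assumes d: "0 < d" "d \<le> 1/2"
  shows "\<bar>1 + a + b * t\<bar> powr d \<le> 1 + d * (a + b * t) - d * (1 - d) / 2 * (a + b * t)^2
     + 48 * (\<bar>a\<bar>^3 + \<bar>b\<bar>^3 * \<bar>t\<bar>^3)"
proof -
  have "\<bar>a + b * t\<bar>^3 \<le> (\<bar>a\<bar> + \<bar>b\<bar> * \<bar>t\<bar>)^3"
    by (intro power_mono) (auto simp: abs_mult intro: order.trans[OF abs_triangle_ineq])
  also have "\<dots> \<le> 4 * (\<bar>a\<bar>^3 + (\<bar>b\<bar> * \<bar>t\<bar>)^3)" by (intro cube_sum) auto
  finally have "\<bar>a + b * t\<bar>^3 \<le> 4 * (\<bar>a\<bar>^3 + \<bar>b\<bar>^3 * \<bar>t\<bar>^3)" by (simp add: power_mult_distrib)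
  then show ?thesis using pow_ineq[OF d, of "a + b * t"] by (simp add: add.assoc)
qed



lemma expect_bound:
  fixes M :: "'a measure" and X :: "'a \<Rightarrow> real" and a b d K :: real
  assumes P: "prob_space M" and meas: "X \<in> borel_measurable M"
    and i1: "integrable M X" and i2: "integrable M (\<lambda>\<omega>. (X \<omega>)^2)"
    and i3: "integrable M (\<lambda>\<omega>. \<bar>X \<omega>\<bar>^3)"
    and m1: "(\<integral>\<omega>. X \<omega> \<partial>M) = 0" and m2: "(\<integral>\<omega>. (X \<omega>)^2 \<partial>M) = 1"
    and m3: "(\<integral>\<omega>. \<bar>X \<omega>\<bar>^3 \<partial>M) \<le> K"
    and d: "0 < d" "d \<le> 1/2"
  shows "(\<integral>\<^sup>+\<omega>. ennreal (\<bar>1 + a + b * X \<omega>\<bar> powr d) \<partial>M)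
     \<le> ennreal (1 + d*a - d*(1-d)/2*(a^2+b^2) + 48*(\<bar>a\<bar>^3 + \<bar>b\<bar>^3*K))"
proof -
  interpret prob_space M by (rule P)
  define c0 where "c0 = 1 + d*a - d*(1-d)/2*a^2 + 48*\<bar>a\<bar>^3"
  define c1 where "c1 = d*b - d*(1-d)*a*b"
  define c2 where "c2 = - (d*(1-d)/2*b^2)"
  define c3 where "c3 = 48*\<bar>b\<bar>^3"
  define Q where "Q = (\<lambda>\<omega>. c0 + c1 * X \<omega> + c2 * (X \<omega>)^2 + c3 * \<bar>X \<omega>\<bar>^3)"
  have Qeq: "Q \<omega> = 1 + d * (a + b * X \<omega>) - d * (1 - d) / 2 * (a + b * X \<omega>)^2
     + 48 * (\<bar>a\<bar>^3 + \<bar>b\<bar>^3 * \<bar>X \<omega>\<bar>^3)" for \<omega>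
    unfolding Q_def c0_def c1_def c2_def c3_def by (simp add: field_simps power2_eq_square)
  have le: "\<bar>1 + a + b * X \<omega>\<bar> powr d \<le> Q \<omega>" for \<omega>
    unfolding Qeq by (rule pow_ineq2[OF d])
  have iQ: "integrable M Q" unfolding Q_def using i1 i2 i3 by auto
  have intQ: "(\<integral>\<omega>. Q \<omega> \<partial>M) = c0 + c1 * 0 + c2 * 1 + c3 * (\<integral>\<omega>. \<bar>X \<omega>\<bar>^3 \<partial>M)"
    unfolding Q_def using i1 i2 i3 m1 m2 by (simp add: prob_space)
  have c3: "c3 \<ge> 0" unfolding c3_def by simp
  have intQ2: "(\<integral>\<omega>. Q \<omega> \<partial>M) \<le> 1 + d*a - d*(1-d)/2*(a^2+b^2) + 48*(\<bar>a\<bar>^3 + \<bar>b\<bar>^3*K)"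
    unfolding intQ using mult_left_mono[OF m3 c3] by (simp add: c0_def c2_def c3_def algebra_simps)
  have measL: "(\<lambda>\<omega>. \<bar>1 + a + b * X \<omega>\<bar> powr d) \<in> borel_measurable M" using meas by measurable
  have "(\<integral>\<^sup>+\<omega>. ennreal (\<bar>1 + a + b * X \<omega>\<bar> powr d) \<partial>M) \<le> (\<integral>\<^sup>+\<omega>. ennreal (Q \<omega>) \<partial>M)"
    by (intro nn_integral_mono ennreal_leI le)
  also have "\<dots> = ennreal (\<integral>\<omega>. Q \<omega> \<partial>M)"
    by (rule nn_integral_eq_integral[OF iQ]) (auto intro!: AE_I2 order.trans[OF _ le])
  also have "\<dots> \<le> ennreal (1 + d*a - d*(1-d)/2*(a^2+b^2) + 48*(\<bar>a\<bar>^3 + \<bar>b\<bar>^3*K))"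
    by (rule ennreal_leI[OF intQ2])
  finally show ?thesis .
qed



primrec xs :: "(real \<Rightarrow> real \<Rightarrow> real) \<Rightarrow> (nat \<Rightarrow> 'a \<Rightarrow> real) \<Rightarrow> real \<Rightarrow> nat \<Rightarrow> 'a \<Rightarrow> real" where
  "xs F \<xi> x0 0 \<omega> = x0"
| "xs F \<xi> x0 (Suc n) \<omega> = xs F \<xi> x0 n \<omega> * F (xs F \<xi> x0 n \<omega>) (\<xi> (Suc n) \<omega>)"

locale stab =
  fixes M :: "'a measure" and \<xi> :: "nat \<Rightarrow> 'a \<Rightarrow> real" and F :: "real \<Rightarrow> real \<Rightarrow> real"
    and x0 d \<kappa> :: real and \<phi> :: "real \<Rightarrow> real"
  assumes P: "prob_space M"
    and indep: "prob_space.indep_vars M (\<lambda>_. borel) \<xi> {1..}"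
    and Fm: "(\<lambda>p. F (fst p) (snd p)) \<in> borel_measurable (borel \<Otimes>\<^sub>M borel)"
    and d: "0 < d" and \<kappa>: "0 < \<kappa>"
    and \<phi>c: "continuous_on UNIV \<phi>" and \<phi>nn: "\<And>u. 0 \<le> \<phi> u" and \<phi>pos: "\<And>u. u \<noteq> 0 \<Longrightarrow> 0 < \<phi> u"
    and bound: "\<And>n u. n \<ge> 1 \<Longrightarrow> u \<noteq> 0 \<Longrightarrow>
       (\<integral>\<^sup>+\<omega>. ennreal (\<bar>F u (\<xi> n \<omega>)\<bar> powr d) \<partial>M) + ennreal (\<kappa> * \<phi> u) \<le> 1"
begin

sublocale prob_space M by (rule P)

lemma Fm_rule[measurable]:
  assumes "f \<in> borel_measurable N" "g \<in> borel_measurable N"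
  shows "(\<lambda>x. F (f x) (g x)) \<in> borel_measurable N"
  using measurable_compose[OF measurable_Pair[OF assms] Fm] by simp

definition "vc n \<omega> = (\<lambda>i\<in>{1..n}. \<xi> i \<omega>)"
definition "PV n = PiM {1..n} (\<lambda>_. borel :: real measure)"
definition "X n \<omega> = xs F \<xi> x0 n \<omega>"
definition "xv n v = xs F (\<lambda>i v. v i) x0 n v"
definition "y n \<omega> = \<bar>X n \<omega>\<bar> powr d"
definition "FF n = vimage_algebra (space M) (vc n) (PV n)"
definition "\<psi> u = \<bar>u\<bar> powr d * \<phi> u"

lemma rv[measurable]: "n \<ge> 1 \<Longrightarrow> \<xi> n \<in> borel_measurable M"
  using indep unfolding indep_vars_def by auto

lemma vc_meas[measurable]: "vc n \<in> measurable M (PV n)"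
  unfolding vc_def PV_def by (intro measurable_restrict) auto

lemma xv_meas[measurable]: "n \<le> m \<Longrightarrow> xv n \<in> borel_measurable (PV m)"
proof (induction n)
  case 0 then show ?case by (simp add: xv_def)
next
  case (Suc n)
  then have [measurable]: "xv n \<in> borel_measurable (PV m)" by simp
  have [measurable]: "(\<lambda>v. v (Suc n)) \<in> borel_measurable (PV m)"
    unfolding PV_def using Suc by (intro measurable_component_singleton) auto
  have "xv (Suc n) = (\<lambda>v. xv n v * F (xv n v) (v (Suc n)))"
    by (simp add: xv_def fun_eq_iff)
  moreover have "(\<lambda>v. xv n v * F (xv n v) (v (Suc n))) \<in> borel_measurable (PV m)" by measurable
  ultimately show ?case by simp
qed

lemma X_vec: "n \<le> m \<Longrightarrow> X n \<omega> = xv n (vc m \<omega>)"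
proof (induction n)
  case 0 then show ?case by (simp add: X_def xv_def)
next
  case (Suc n)
  then have "X n \<omega> = xv n (vc m \<omega>)" by simp
  moreover have "vc m \<omega> (Suc n) = \<xi> (Suc n) \<omega>" using Suc by (simp add: vc_def)
  ultimately show ?case by (simp add: X_def xv_def)
qed

lemma vc_space: "vc n \<in> space M \<rightarrow> space (PV n)"
  using measurable_space[OF vc_meas] by auto

lemma vc_FF[measurable]: "vc n \<in> measurable (FF n) (PV n)"
  unfolding FF_def by (rule measurable_vimage_algebra1[OF vc_space])

lemma space_FF[simp]: "space (FF n) = space M" by (simp add: FF_def)

lemma sets_FF: "sets (FF n) = {vc n -` B \<inter> space M | B. B \<in> sets (PV n)}"
  unfolding FF_def by (rule sets_vimage_algebra2[OF vc_space])

lemma FF_M: "A \<in> sets (FF n) \<Longrightarrow> A \<in> sets M"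
  unfolding sets_FF using vc_meas by auto

lemma X_FF[measurable]: "k \<le> N \<Longrightarrow> X k \<in> borel_measurable (FF N)"
proof -
  assume k: "k \<le> N"
  then have [measurable]: "xv k \<in> borel_measurable (PV N)" by (rule xv_meas)
  have "(\<lambda>\<omega>. xv k (vc N \<omega>)) \<in> borel_measurable (FF N)" by measurable
  moreover have "X k = (\<lambda>\<omega>. xv k (vc N \<omega>))" using X_vec[OF k] by auto
  ultimately show ?thesis by simp
qed

lemma X_M[measurable]: "X k \<in> borel_measurable M"
  using X_vec[of k k] xv_meas[of k k] vc_meas[of k]
  by (metis (no_types, lifting) ext le_refl measurable_comp comp_def)

lemma y_FF[measurable]: "k \<le> N \<Longrightarrow> y k \<in> borel_measurable (FF N)"
  unfolding y_def[abs_def] by measurable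

lemma y_M[measurable]: "y k \<in> borel_measurable M"
  unfolding y_def[abs_def] by measurable

lemma y_nn: "0 \<le> y k \<omega>" by (simp add: y_def)

lemma \<phi>m[measurable]: "\<phi> \<in> borel_measurable borel"
  by (intro borel_measurable_continuous_onI \<phi>c)

lemma psi_nn: "0 \<le> \<psi> u" by (simp add: \<psi>_def \<phi>nn)

lemma key:
  assumes A: "A \<in> sets (FF n)"
  shows "(\<integral>\<^sup>+\<omega>. indicator A \<omega> * (ennreal (y (Suc n) \<omega>) + ennreal (\<kappa> * \<psi> (X n \<omega>))) \<partial>M)
     \<le> (\<integral>\<^sup>+\<omega>. indicator A \<omega> * ennreal (y n \<omega>) \<partial>M)"
proof -
  obtain B where B: "B \<in> sets (PV n)" and AB: "A = vc n -` B \<inter> space M"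
    using A unfolding sets_FF by auto
  define Z where "Z = \<xi> (Suc n)"
  define W where "W = (\<lambda>\<omega>. restrict (\<lambda>i. \<xi> i \<omega>) {Suc n})"
  define PW where "PW = PiM {Suc n} (\<lambda>_. borel :: real measure)"
  have [measurable]: "Z \<in> borel_measurable M" unfolding Z_def by measurable
  have [measurable]: "W \<in> measurable M PW" unfolding W_def PW_def by (intro measurable_restrict) auto
  have [measurable]: "(\<lambda>w. w (Suc n)) \<in> borel_measurable PW"
    unfolding PW_def by (intro measurable_component_singleton) auto
  have ivZ: "indep_var (PV n) (vc n) PW W"
    unfolding PV_def vc_def PW_def W_def by (rule indep_var_restrict[OF indep]) auto
  define D where "D = distr M (PV n) (vc n)"
  define E where "E = distr M PW W"
  have DE: "D \<Otimes>\<^sub>M E = distr M (PV n \<Otimes>\<^sub>M PW) (\<lambda>\<omega>. (vc n \<omega>, W \<omega>))"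
    using ivZ unfolding indep_var_distribution_eq D_def E_def by simp
  interpret E: prob_space E unfolding E_def by (rule prob_space_distr) measurable
  have [measurable]: "xv n \<in> borel_measurable (PV n)" by (rule xv_meas) simp
  define H where "H = (\<lambda>p::(nat \<Rightarrow> real) \<times> (nat \<Rightarrow> real). indicator B (fst p) *
     (ennreal (\<bar>xv n (fst p)\<bar> powr d * \<bar>F (xv n (fst p)) (snd p (Suc n))\<bar> powr d) + ennreal (\<kappa> * \<psi> (xv n (fst p)))))"
  have \<psi>m[measurable]: "\<psi> \<in> borel_measurable borel"
    unfolding \<psi>_def[abs_def] by measurable
  have Hm[measurable]: "H \<in> borel_measurable (PV n \<Otimes>\<^sub>M PW)"
    unfolding H_def using B by measurable
  have "(\<integral>\<^sup>+\<omega>. indicator A \<omega> * (ennreal (y (Suc n) \<omega>) + ennreal (\<kappa> * \<psi> (X n \<omega>))) \<partial>M)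
      = (\<integral>\<^sup>+\<omega>. H (vc n \<omega>, W \<omega>) \<partial>M)"
  proof (intro nn_integral_cong)
    fix \<omega> assume \<omega>: "\<omega> \<in> space M"
    have Xn: "X n \<omega> = xv n (vc n \<omega>)" by (rule X_vec) simp
    have XS: "X (Suc n) \<omega> = X n \<omega> * F (X n \<omega>) (Z \<omega>)" by (simp add: X_def Z_def)
    have "y (Suc n) \<omega> = \<bar>xv n (vc n \<omega>)\<bar> powr d * \<bar>F (xv n (vc n \<omega>)) (Z \<omega>)\<bar> powr d"
      unfolding y_def XS Xn abs_mult by (simp add: powr_mult)
    moreover have "indicator A \<omega> = (indicator B (vc n \<omega>) :: ennreal)"
      using \<omega> AB by (simp add: indicator_def)
    ultimately show "indicator A \<omega> * (ennreal (y (Suc n) \<omega>) + ennreal (\<kappa> * \<psi> (X n \<omega>))) = H (vc n \<omega>, W \<omega>)"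
      unfolding H_def Xn by (simp add: W_def Z_def)
  qed
  also have "\<dots> = (\<integral>\<^sup>+p. H p \<partial>(distr M (PV n \<Otimes>\<^sub>M PW) (\<lambda>\<omega>. (vc n \<omega>, W \<omega>))))"
    by (subst nn_integral_distr) auto
  also have "\<dots> = (\<integral>\<^sup>+p. H p \<partial>(D \<Otimes>\<^sub>M E))"
    by (simp only: DE)
  also have "\<dots> = (\<integral>\<^sup>+v. \<integral>\<^sup>+t. H (v, t) \<partial>E \<partial>D)"
  proof -
    have sDE: "sets (D \<Otimes>\<^sub>M E) = sets (PV n \<Otimes>\<^sub>M PW)"
      by (rule sets_pair_measure_cong) (simp_all add: D_def E_def)
    have "H \<in> borel_measurable (D \<Otimes>\<^sub>M E)"
      by (subst measurable_cong_sets[OF sDE refl]) (rule Hm)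
    then show ?thesis by (rule E.nn_integral_fst[symmetric])
  qed
  also have "\<dots> \<le> (\<integral>\<^sup>+v. indicator B v * ennreal (\<bar>xv n v\<bar> powr d) \<partial>D)"
  proof (intro nn_integral_mono)
    fix v
    define u where "u = xv n v"
    have [measurable]: "(\<lambda>t. ennreal (\<bar>F u (t (Suc n))\<bar> powr d)) \<in> borel_measurable PW" by measurable
    have pt: "H (v, t) = (indicator B v * ennreal (\<bar>u\<bar> powr d)) * (ennreal (\<bar>F u (t (Suc n))\<bar> powr d)
         + ennreal (\<kappa> * \<phi> u))" for t
    proof -
      have e1: "ennreal (\<bar>u\<bar> powr d * \<bar>F u (t (Suc n))\<bar> powr d) = ennreal (\<bar>u\<bar> powr d) * ennreal (\<bar>F u (t (Suc n))\<bar> powr d)"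
        by (rule ennreal_mult) auto
      have e2: "ennreal (\<kappa> * \<psi> u) = ennreal (\<bar>u\<bar> powr d) * ennreal (\<kappa> * \<phi> u)"
        unfolding \<psi>_def by (subst ennreal_mult[symmetric]) (auto simp: \<phi>nn \<kappa> less_imp_le mult.left_commute)
      show ?thesis unfolding H_def fst_conv snd_conv u_def[symmetric] e1 e2
        by (simp only: distrib_left mult.assoc)
    qed
    have "(\<integral>\<^sup>+t. H (v, t) \<partial>E) = (\<integral>\<^sup>+t. (indicator B v * ennreal (\<bar>u\<bar> powr d)) * (ennreal (\<bar>F u (t (Suc n))\<bar> powr d)
         + ennreal (\<kappa> * \<phi> u)) \<partial>E)"
      by (simp only: pt)
    also have "\<dots> = indicator B v * ennreal (\<bar>u\<bar> powr d) * ((\<integral>\<^sup>+t. ennreal (\<bar>F u (t (Suc n))\<bar> powr d) \<partial>E) + ennreal (\<kappa> * \<phi> u))"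
    proof -
      have sE: "sets E = sets PW" by (simp add: E_def)
      have m1: "(\<lambda>t. ennreal (\<bar>F u (t (Suc n))\<bar> powr d)) \<in> borel_measurable E"
        by (subst measurable_cong_sets[OF sE refl]) measurable
      have "(\<integral>\<^sup>+t. ennreal (\<bar>F u (t (Suc n))\<bar> powr d) + ennreal (\<kappa> * \<phi> u) \<partial>E)
          = (\<integral>\<^sup>+t. ennreal (\<bar>F u (t (Suc n))\<bar> powr d) \<partial>E) + ennreal (\<kappa> * \<phi> u)"
        using nn_integral_add[OF m1, of "\<lambda>_. ennreal (\<kappa> * \<phi> u)"] by (simp add: E.emeasure_space_1)
      moreover have "(\<integral>\<^sup>+t. (indicator B v * ennreal (\<bar>u\<bar> powr d)) * (ennreal (\<bar>F u (t (Suc n))\<bar> powr d)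
         + ennreal (\<kappa> * \<phi> u)) \<partial>E) = (indicator B v * ennreal (\<bar>u\<bar> powr d)) * (\<integral>\<^sup>+t. ennreal (\<bar>F u (t (Suc n))\<bar> powr d) + ennreal (\<kappa> * \<phi> u) \<partial>E)"
        using m1 by (intro nn_integral_cmult) auto
      ultimately show ?thesis by simp
    qed
    also have "(\<integral>\<^sup>+t. ennreal (\<bar>F u (t (Suc n))\<bar> powr d) \<partial>E) = (\<integral>\<^sup>+\<omega>. ennreal (\<bar>F u (\<xi> (Suc n) \<omega>)\<bar> powr d) \<partial>M)"
      unfolding E_def by (subst nn_integral_distr) (measurable, simp add: W_def)
    also have "indicator B v * ennreal (\<bar>u\<bar> powr d) * ((\<integral>\<^sup>+\<omega>. ennreal (\<bar>F u (\<xi> (Suc n) \<omega>)\<bar> powr d) \<partial>M) + ennreal (\<kappa> * \<phi> u))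
        \<le> indicator B v * ennreal (\<bar>u\<bar> powr d) * 1"
    proof (cases "u = 0")
      case True then show ?thesis by simp
    next
      case False then show ?thesis by (intro mult_left_mono bound) auto
    qed
    finally show "(\<integral>\<^sup>+t. H (v, t) \<partial>E) \<le> indicator B v * ennreal (\<bar>xv n v\<bar> powr d)"
      by (simp add: u_def)
  qed
  also have "\<dots> = (\<integral>\<^sup>+\<omega>. indicator B (vc n \<omega>) * ennreal (\<bar>xv n (vc n \<omega>)\<bar> powr d) \<partial>M)"
    unfolding D_def using B by (subst nn_integral_distr) auto
  also have "\<dots> = (\<integral>\<^sup>+\<omega>. indicator A \<omega> * ennreal (y n \<omega>) \<partial>M)"
  proof (intro nn_integral_cong)
    fix \<omega> assume \<omega>: "\<omega> \<in> space M"
    have Xn: "X n \<omega> = xv n (vc n \<omega>)" by (rule X_vec) simp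
    moreover have "indicator A \<omega> = (indicator B (vc n \<omega>) :: ennreal)"
      using \<omega> AB by (simp add: indicator_def)
    ultimately show "indicator B (vc n \<omega>) * ennreal (\<bar>xv n (vc n \<omega>)\<bar> powr d) = indicator A \<omega> * ennreal (y n \<omega>)"
      by (simp add: y_def)
  qed
  finally show ?thesis .
qed


lemma space_in_FF: "space M \<in> sets (FF n)"
  using sets.top[of "FF n"] by simp

lemma psi_X_M[measurable]: "(\<lambda>\<omega>. \<psi> (X n \<omega>)) \<in> borel_measurable M"
  unfolding \<psi>_def by measurable

lemma key_space:
  "(\<integral>\<^sup>+\<omega>. ennreal (y (Suc n) \<omega>) \<partial>M) + (\<integral>\<^sup>+\<omega>. ennreal (\<kappa> * \<psi> (X n \<omega>)) \<partial>M)
     \<le> (\<integral>\<^sup>+\<omega>. ennreal (y n \<omega>) \<partial>M)"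
proof -
  have "(\<integral>\<^sup>+\<omega>. ennreal (y (Suc n) \<omega>) \<partial>M) + (\<integral>\<^sup>+\<omega>. ennreal (\<kappa> * \<psi> (X n \<omega>)) \<partial>M)
     = (\<integral>\<^sup>+\<omega>. ennreal (y (Suc n) \<omega>) + ennreal (\<kappa> * \<psi> (X n \<omega>)) \<partial>M)"
    by (rule nn_integral_add[symmetric]) measurable
  also have "\<dots> = (\<integral>\<^sup>+\<omega>. indicator (space M) \<omega> * (ennreal (y (Suc n) \<omega>) + ennreal (\<kappa> * \<psi> (X n \<omega>))) \<partial>M)"
    by (intro nn_integral_cong) simp
  also have "\<dots> \<le> (\<integral>\<^sup>+\<omega>. indicator (space M) \<omega> * ennreal (y n \<omega>) \<partial>M)"
    by (rule key[OF space_in_FF])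
  also have "\<dots> = (\<integral>\<^sup>+\<omega>. ennreal (y n \<omega>) \<partial>M)"
    by (intro nn_integral_cong) simp
  finally show ?thesis .
qed

lemma sum_bound:
  "(\<integral>\<^sup>+\<omega>. ennreal (y N \<omega>) \<partial>M) + (\<Sum>n<N. \<integral>\<^sup>+\<omega>. ennreal (\<kappa> * \<psi> (X n \<omega>)) \<partial>M)
     \<le> ennreal (\<bar>x0\<bar> powr d)"
proof (induction N)
  case 0
  have "(\<integral>\<^sup>+\<omega>. ennreal (y 0 \<omega>) \<partial>M) = ennreal (\<bar>x0\<bar> powr d)"
    by (simp add: y_def X_def emeasure_space_1)
  then show ?case by simp
next
  case (Suc N)
  have "(\<integral>\<^sup>+\<omega>. ennreal (y (Suc N) \<omega>) \<partial>M) + (\<Sum>n<Suc N. \<integral>\<^sup>+\<omega>. ennreal (\<kappa> * \<psi> (X n \<omega>)) \<partial>M)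
     = ((\<integral>\<^sup>+\<omega>. ennreal (y (Suc N) \<omega>) \<partial>M) + (\<integral>\<^sup>+\<omega>. ennreal (\<kappa> * \<psi> (X N \<omega>)) \<partial>M))
       + (\<Sum>n<N. \<integral>\<^sup>+\<omega>. ennreal (\<kappa> * \<psi> (X n \<omega>)) \<partial>M)"
    by (simp add: ac_simps)
  also have "\<dots> \<le> (\<integral>\<^sup>+\<omega>. ennreal (y N \<omega>) \<partial>M) + (\<Sum>n<N. \<integral>\<^sup>+\<omega>. ennreal (\<kappa> * \<psi> (X n \<omega>)) \<partial>M)"
    by (intro add_right_mono key_space)
  also have "\<dots> \<le> ennreal (\<bar>x0\<bar> powr d)" by (rule Suc.IH)
  finally show ?case .
qed

lemma AE_psi_lim: "AE \<omega> in M. (\<lambda>n. \<psi> (X n \<omega>)) \<longlonglongrightarrow> 0"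
proof -
  have "(\<integral>\<^sup>+\<omega>. (\<Sum>n. ennreal (\<kappa> * \<psi> (X n \<omega>))) \<partial>M) = (\<Sum>n. \<integral>\<^sup>+\<omega>. ennreal (\<kappa> * \<psi> (X n \<omega>)) \<partial>M)"
    by (rule nn_integral_suminf) measurable
  also have "\<dots> \<le> ennreal (\<bar>x0\<bar> powr d)"
  proof (rule suminf_le_const)
    show "summable (\<lambda>n. \<integral>\<^sup>+\<omega>. ennreal (\<kappa> * \<psi> (X n \<omega>)) \<partial>M)" by (rule summableI)
    fix N
    show "(\<Sum>n<N. \<integral>\<^sup>+\<omega>. ennreal (\<kappa> * \<psi> (X n \<omega>)) \<partial>M) \<le> ennreal (\<bar>x0\<bar> powr d)"
      using sum_bound[of N] by (rule order.trans[rotated]) simp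
  qed
  finally have "(\<integral>\<^sup>+\<omega>. (\<Sum>n. ennreal (\<kappa> * \<psi> (X n \<omega>))) \<partial>M) \<noteq> \<infinity>"
    by (auto simp: top_unique)
  then have "AE \<omega> in M. (\<Sum>n. ennreal (\<kappa> * \<psi> (X n \<omega>))) \<noteq> \<infinity>"
    by (intro nn_integral_noteq_infinite) measurable
  then show ?thesis
  proof (rule AE_mp, intro AE_I2 impI)
    fix \<omega> assume "(\<Sum>n. ennreal (\<kappa> * \<psi> (X n \<omega>))) \<noteq> \<infinity>"
    then have "summable (\<lambda>n. \<kappa> * \<psi> (X n \<omega>))"
      by (intro summable_suminf_not_top) (auto simp: psi_nn \<kappa> less_imp_le)
    then have "(\<lambda>n. \<kappa> * \<psi> (X n \<omega>)) \<longlonglongrightarrow> 0" by (rule summable_LIMSEQ_zero)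
    then have "(\<lambda>n. (1/\<kappa>) * (\<kappa> * \<psi> (X n \<omega>))) \<longlonglongrightarrow> (1/\<kappa>) * 0" by (intro tendsto_mult tendsto_const)
    then show "(\<lambda>n. \<psi> (X n \<omega>)) \<longlonglongrightarrow> 0" using \<kappa> by simp
  qed
qed


lemma FF_mono: assumes "n \<le> N" "A \<in> sets (FF n)" shows "A \<in> sets (FF N)"
proof -
  obtain B where B: "B \<in> sets (PV n)" and AB: "A = vc n -` B \<inter> space M"
    using assms(2) unfolding sets_FF by auto
  define B' where "B' = (\<lambda>v. restrict v {1..n}) -` B \<inter> space (PV N)"
  have "(\<lambda>v. restrict v {1..n}) \<in> measurable (PV N) (PV n)"
    unfolding PV_def using assms(1) by (intro measurable_restrict_subset) auto
  then have B'm: "B' \<in> sets (PV N)" unfolding B'_def using B by (rule measurable_sets)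
  have "A = vc N -` B' \<inter> space M"
  proof -
    have "\<omega> \<in> space M \<Longrightarrow> restrict (vc N \<omega>) {1..n} = vc n \<omega>" for \<omega>
      using assms(1) by (auto simp: vc_def fun_eq_iff)
    then show ?thesis unfolding AB B'_def using vc_space[of N] by auto
  qed
  then show ?thesis unfolding sets_FF using B'm by auto
qed

lemma y_ge_FF: "k \<le> N \<Longrightarrow> {\<omega>\<in>space M. c \<le> y k \<omega>} \<in> sets (FF N)"
  using measurable_sets[OF y_FF, of k N "{c..}"] by (simp add: vimage_def Int_def conj_commute)

lemma y_lt_FF: "k \<le> N \<Longrightarrow> {\<omega>\<in>space M. y k \<omega> < c} \<in> sets (FF N)"
  using measurable_sets[OF y_FF, of k N "{..<c}"] by (simp add: vimage_def Int_def conj_commute)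

lemma y_le_FF: "k \<le> N \<Longrightarrow> {\<omega>\<in>space M. y k \<omega> \<le> c} \<in> sets (FF N)"
  using measurable_sets[OF y_FF, of k N "{..c}"] by (simp add: vimage_def Int_def conj_commute)

lemma y_gt_FF: "k \<le> N \<Longrightarrow> {\<omega>\<in>space M. c < y k \<omega>} \<in> sets (FF N)"
  using measurable_sets[OF y_FF, of k N "{c<..}"] by (simp add: vimage_def Int_def conj_commute)

lemma ex_ge_FF: "{\<omega>\<in>space M. \<exists>k\<in>{n..N}. c \<le> y k \<omega>} \<in> sets (FF N)"
proof -
  have "{\<omega>\<in>space M. \<exists>k\<in>{n..N}. c \<le> y k \<omega>} = (\<Union>k\<in>{n..N}. {\<omega>\<in>space M. c \<le> y k \<omega>})" by auto
  also have "\<dots> \<in> sets (FF N)" by (intro sets.finite_UN y_ge_FF) auto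
  finally show ?thesis .
qed

lemma all_lt_FF: "{\<omega>\<in>space M. \<forall>k\<in>{n..N}. y k \<omega> < c} \<in> sets (FF N)"
proof -
  have "{\<omega>\<in>space M. \<forall>k\<in>{n..N}. y k \<omega> < c} = space (FF N) - {\<omega>\<in>space M. \<exists>k\<in>{n..N}. c \<le> y k \<omega>}"
    by (auto simp: not_le[symmetric])
  also have "\<dots> \<in> sets (FF N)" by (intro sets.compl_sets ex_ge_FF)
  finally show ?thesis .
qed

lemma Y_M[measurable]: "(\<lambda>\<omega>. ennreal (y k \<omega>)) \<in> borel_measurable M" by measurable

lemma split_int:
  assumes "C \<in> sets M" "G \<in> sets M"
  shows "(\<integral>\<^sup>+\<omega>. indicator C \<omega> * ennreal (y k \<omega>) \<partial>M)
    = (\<integral>\<^sup>+\<omega>. indicator (C \<inter> G) \<omega> * ennreal (y k \<omega>) \<partial>M) + (\<integral>\<^sup>+\<omega>. indicator (C - G) \<omega> * ennreal (y k \<omega>) \<partial>M)"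
proof -
  have "(\<integral>\<^sup>+\<omega>. indicator C \<omega> * ennreal (y k \<omega>) \<partial>M)
     = (\<integral>\<^sup>+\<omega>. indicator (C \<inter> G) \<omega> * ennreal (y k \<omega>) + indicator (C - G) \<omega> * ennreal (y k \<omega>) \<partial>M)"
    by (intro nn_integral_cong) (auto simp: indicator_def)
  also have "\<dots> = (\<integral>\<^sup>+\<omega>. indicator (C \<inter> G) \<omega> * ennreal (y k \<omega>) \<partial>M) + (\<integral>\<^sup>+\<omega>. indicator (C - G) \<omega> * ennreal (y k \<omega>) \<partial>M)"
    using assms by (intro nn_integral_add borel_measurable_times_ennreal borel_measurable_indicator) auto
  finally show ?thesis .
qed

lemma lower_int:
  assumes "C \<in> sets M" "\<And>\<omega>. \<omega> \<in> C \<Longrightarrow> c \<le> y k \<omega>"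
  shows "ennreal c * emeasure M C \<le> (\<integral>\<^sup>+\<omega>. indicator C \<omega> * ennreal (y k \<omega>) \<partial>M)"
proof -
  have "ennreal c * emeasure M C = (\<integral>\<^sup>+\<omega>. ennreal c * indicator C \<omega> \<partial>M)"
    using assms by (simp add: nn_integral_cmult_indicator)
  also have "\<dots> \<le> (\<integral>\<^sup>+\<omega>. indicator C \<omega> * ennreal (y k \<omega>) \<partial>M)"
    using assms by (intro nn_integral_mono) (auto simp: indicator_def intro: ennreal_leI)
  finally show ?thesis .
qed

lemma FF_sub_space: "A \<in> sets (FF n) \<Longrightarrow> A \<subseteq> space M"
  using sets.sets_into_space[of A "FF n"] by simp

lemma max_fin:
  assumes A: "A \<in> sets (FF n)" and c: "0 < c"
  shows "ennreal c * emeasure M (A \<inter> {\<omega>\<in>space M. \<exists>k\<in>{n..n+j}. c \<le> y k \<omega>})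
    + (\<integral>\<^sup>+\<omega>. indicator (A \<inter> {\<omega>\<in>space M. \<forall>k\<in>{n..n+j}. y k \<omega> < c}) \<omega> * ennreal (y (n+j) \<omega>) \<partial>M)
    \<le> (\<integral>\<^sup>+\<omega>. indicator A \<omega> * ennreal (y n \<omega>) \<partial>M)"
proof (induction j)
  case 0
  define S where "S = A \<inter> {\<omega>\<in>space M. c \<le> y n \<omega>}"
  have AM: "A \<in> sets M" by (rule FF_M[OF A])
  have SM: "S \<in> sets M" unfolding S_def using AM by measurable
  have GM: "{\<omega>\<in>space M. c \<le> y n \<omega>} \<in> sets M" by measurable
  have "ennreal c * emeasure M S \<le> (\<integral>\<^sup>+\<omega>. indicator S \<omega> * ennreal (y n \<omega>) \<partial>M)"
    by (rule lower_int[OF SM]) (auto simp: S_def)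
  moreover have "(\<integral>\<^sup>+\<omega>. indicator A \<omega> * ennreal (y n \<omega>) \<partial>M)
     = (\<integral>\<^sup>+\<omega>. indicator S \<omega> * ennreal (y n \<omega>) \<partial>M)
       + (\<integral>\<^sup>+\<omega>. indicator (A \<inter> {\<omega>\<in>space M. y n \<omega> < c}) \<omega> * ennreal (y n \<omega>) \<partial>M)"
  proof -
    have e1: "A \<inter> {\<omega>\<in>space M. c \<le> y n \<omega>} = S" by (simp add: S_def)
    have e2: "A - {\<omega>\<in>space M. c \<le> y n \<omega>} = A \<inter> {\<omega>\<in>space M. y n \<omega> < c}"
      using FF_sub_space[OF A] by auto
    show ?thesis using split_int[OF AM GM, of n] unfolding e1 e2 .
  qed
  ultimately show ?case unfolding S_def by (simp add: add_right_mono)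
next
  case (Suc j)
  define N where "N = n + j"
  define Sj where "Sj = A \<inter> {\<omega>\<in>space M. \<exists>k\<in>{n..N}. c \<le> y k \<omega>}"
  define Tj where "Tj = A \<inter> {\<omega>\<in>space M. \<forall>k\<in>{n..N}. y k \<omega> < c}"
  define G where "G = {\<omega>\<in>space M. c \<le> y (Suc N) \<omega>}"
  have AN: "A \<in> sets (FF N)" using FF_mono[OF _ A, of N] by (simp add: N_def)
  have TjF: "Tj \<in> sets (FF N)" unfolding Tj_def using AN all_lt_FF by (rule sets.Int)
  have TjM: "Tj \<in> sets M" by (rule FF_M[OF TjF])
  have SjM: "Sj \<in> sets M" unfolding Sj_def using FF_M[OF AN] FF_M[OF ex_ge_FF] by (rule sets.Int)
  have GM: "G \<in> sets M" unfolding G_def by measurable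
  have S1: "A \<inter> {\<omega>\<in>space M. \<exists>k\<in>{n..n + Suc j}. c \<le> y k \<omega>} = Sj \<union> (Tj \<inter> G)"
    unfolding Sj_def Tj_def G_def N_def by (auto simp: le_Suc_eq not_le[symmetric]; metis le_SucE not_le)
  have T1: "A \<inter> {\<omega>\<in>space M. \<forall>k\<in>{n..n + Suc j}. y k \<omega> < c} = Tj - G"
    unfolding Tj_def G_def N_def using FF_sub_space[OF A] by (auto simp: le_Suc_eq not_le[symmetric]; metis le_SucE not_le)
  have disj: "Sj \<inter> (Tj \<inter> G) = {}" unfolding Sj_def Tj_def by auto
  have meas: "emeasure M (Sj \<union> (Tj \<inter> G)) = emeasure M Sj + emeasure M (Tj \<inter> G)"
    using SjM TjM GM disj by (intro plus_emeasure[symmetric]) auto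
  have low: "ennreal c * emeasure M (Tj \<inter> G) \<le> (\<integral>\<^sup>+\<omega>. indicator (Tj \<inter> G) \<omega> * ennreal (y (Suc N) \<omega>) \<partial>M)"
    using TjM GM by (intro lower_int) (auto simp: G_def)
  have sp: "(\<integral>\<^sup>+\<omega>. indicator Tj \<omega> * ennreal (y (Suc N) \<omega>) \<partial>M)
      = (\<integral>\<^sup>+\<omega>. indicator (Tj \<inter> G) \<omega> * ennreal (y (Suc N) \<omega>) \<partial>M) + (\<integral>\<^sup>+\<omega>. indicator (Tj - G) \<omega> * ennreal (y (Suc N) \<omega>) \<partial>M)"
    by (rule split_int[OF TjM GM])
  have "(\<integral>\<^sup>+\<omega>. indicator Tj \<omega> * ennreal (y (Suc N) \<omega>) \<partial>M)
      \<le> (\<integral>\<^sup>+\<omega>. indicator Tj \<omega> * (ennreal (y (Suc N) \<omega>) + ennreal (\<kappa> * \<psi> (X N \<omega>))) \<partial>M)"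
    by (intro nn_integral_mono mult_left_mono) auto
  also have "\<dots> \<le> (\<integral>\<^sup>+\<omega>. indicator Tj \<omega> * ennreal (y N \<omega>) \<partial>M)" by (rule key[OF TjF])
  finally have kk: "(\<integral>\<^sup>+\<omega>. indicator Tj \<omega> * ennreal (y (Suc N) \<omega>) \<partial>M) \<le> (\<integral>\<^sup>+\<omega>. indicator Tj \<omega> * ennreal (y N \<omega>) \<partial>M)" .
  have "ennreal c * emeasure M (A \<inter> {\<omega>\<in>space M. \<exists>k\<in>{n..n + Suc j}. c \<le> y k \<omega>})
    + (\<integral>\<^sup>+\<omega>. indicator (A \<inter> {\<omega>\<in>space M. \<forall>k\<in>{n..n + Suc j}. y k \<omega> < c}) \<omega> * ennreal (y (n + Suc j) \<omega>) \<partial>M)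
    = ennreal c * emeasure M Sj + (ennreal c * emeasure M (Tj \<inter> G)
       + (\<integral>\<^sup>+\<omega>. indicator (Tj - G) \<omega> * ennreal (y (Suc N) \<omega>) \<partial>M))"
    unfolding S1 T1 meas by (simp add: N_def distrib_left add.assoc)
  also have "\<dots> \<le> ennreal c * emeasure M Sj + (\<integral>\<^sup>+\<omega>. indicator Tj \<omega> * ennreal (y (Suc N) \<omega>) \<partial>M)"
    unfolding sp by (intro add_left_mono add_right_mono low)
  also have "\<dots> \<le> ennreal c * emeasure M Sj + (\<integral>\<^sup>+\<omega>. indicator Tj \<omega> * ennreal (y N \<omega>) \<partial>M)"
    by (intro add_left_mono kk)
  also have "\<dots> \<le> (\<integral>\<^sup>+\<omega>. indicator A \<omega> * ennreal (y n \<omega>) \<partial>M)"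
    using Suc.IH unfolding Sj_def Tj_def N_def .
  finally show ?case .
qed


lemma max_inf:
  assumes A: "A \<in> sets (FF n)" and c: "0 < c"
  shows "ennreal c * emeasure M (A \<inter> {\<omega>\<in>space M. \<exists>k\<ge>n. c \<le> y k \<omega>})
    \<le> (\<integral>\<^sup>+\<omega>. indicator A \<omega> * ennreal (y n \<omega>) \<partial>M)"
proof -
  define U where "U j = A \<inter> {\<omega>\<in>space M. \<exists>k\<in>{n..n+j}. c \<le> y k \<omega>}" for j
  have UM: "range U \<subseteq> sets M"
  proof -
    have "U j \<in> sets M" for j
      unfolding U_def using FF_M[OF FF_mono[OF _ A], of "n+j"] FF_M[OF ex_ge_FF, of n "n+j" c]
      by (intro sets.Int) auto
    then show ?thesis by auto
  qed
  have inc: "incseq U"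
  proof (rule incseq_SucI)
    fix j show "U j \<subseteq> U (Suc j)" unfolding U_def by force
  qed
  have UU: "(\<Union>j. U j) = A \<inter> {\<omega>\<in>space M. \<exists>k\<ge>n. c \<le> y k \<omega>}"
  proof
    show "(\<Union>j. U j) \<subseteq> A \<inter> {\<omega>\<in>space M. \<exists>k\<ge>n. c \<le> y k \<omega>}" unfolding U_def by force
    show "A \<inter> {\<omega>\<in>space M. \<exists>k\<ge>n. c \<le> y k \<omega>} \<subseteq> (\<Union>j. U j)"
    proof
      fix \<omega> assume "\<omega> \<in> A \<inter> {\<omega>\<in>space M. \<exists>k\<ge>n. c \<le> y k \<omega>}"
      then obtain k where "\<omega> \<in> A" "\<omega> \<in> space M" "k \<ge> n" "c \<le> y k \<omega>" by auto
      then have "\<omega> \<in> U (k - n)" unfolding U_def by force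
      then show "\<omega> \<in> (\<Union>j. U j)" by blast
    qed
  qed
  have "ennreal c * emeasure M (\<Union>j. U j) = ennreal c * (SUP j. emeasure M (U j))"
    using SUP_emeasure_incseq[OF UM inc] by simp
  also have "\<dots> = (SUP j. ennreal c * emeasure M (U j))" by (rule SUP_mult_left_ennreal)
  also have "\<dots> \<le> (\<integral>\<^sup>+\<omega>. indicator A \<omega> * ennreal (y n \<omega>) \<partial>M)"
  proof (rule SUP_least)
    fix j
    have "ennreal c * emeasure M (U j) \<le> ennreal c * emeasure M (U j)
      + (\<integral>\<^sup>+\<omega>. indicator (A \<inter> {\<omega>\<in>space M. \<forall>k\<in>{n..n+j}. y k \<omega> < c}) \<omega> * ennreal (y (n+j) \<omega>) \<partial>M)"
      by simp
    also have "\<dots> \<le> (\<integral>\<^sup>+\<omega>. indicator A \<omega> * ennreal (y n \<omega>) \<partial>M)"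
      unfolding U_def by (rule max_fin[OF A c])
    finally show "ennreal c * emeasure M (U j) \<le> (\<integral>\<^sup>+\<omega>. indicator A \<omega> * ennreal (y n \<omega>) \<partial>M)" .
  qed
  finally show ?thesis unfolding UU .
qed

lemma bad:
  assumes c: "0 < c" and \<eta>: "0 < \<eta>"
  shows "ennreal c * emeasure M {\<omega>\<in>space M. \<exists>m. y m \<omega> \<le> \<eta> \<and> (\<exists>k\<ge>m. c \<le> y k \<omega>)} \<le> ennreal \<eta>"
proof -
  define A where "A m = {\<omega>\<in>space M. y m \<omega> \<le> \<eta> \<and> (\<forall>j<m. \<eta> < y j \<omega>)}" for m
  have AF: "A m \<in> sets (FF m)" for m
  proof -
    have "A m = {\<omega>\<in>space M. y m \<omega> \<le> \<eta>} \<inter> (space (FF m) - (\<Union>j\<in>{..<m}. {\<omega>\<in>space M. y j \<omega> \<le> \<eta>}))"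
      unfolding A_def by (auto simp: not_le[symmetric])
    also have "\<dots> \<in> sets (FF m)"
      by (intro sets.Int sets.compl_sets sets.finite_UN y_le_FF) auto
    finally show ?thesis .
  qed
  have AM: "A m \<in> sets M" for m by (rule FF_M[OF AF])
  define C where "C m = A m \<inter> {\<omega>\<in>space M. \<exists>k\<ge>m. c \<le> y k \<omega>}" for m
  have CM: "range C \<subseteq> sets M"
  proof -
    have "{\<omega>\<in>space M. \<exists>k\<ge>m. c \<le> y k \<omega>} \<in> sets M" for m
    proof -
      have "{\<omega>\<in>space M. \<exists>k\<ge>m. c \<le> y k \<omega>} = (\<Union>k\<in>{m..}. {\<omega>\<in>space M. c \<le> y k \<omega>})" by auto
      also have "\<dots> \<in> sets M" by (intro sets.countable_UN') (auto simp: image_subset_iff)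
      finally show ?thesis .
    qed
    then show ?thesis unfolding C_def using AM by auto
  qed
  have sub: "{\<omega>\<in>space M. \<exists>m. y m \<omega> \<le> \<eta> \<and> (\<exists>k\<ge>m. c \<le> y k \<omega>)} \<subseteq> (\<Union>m. C m)"
  proof
    fix \<omega> assume "\<omega> \<in> {\<omega>\<in>space M. \<exists>m. y m \<omega> \<le> \<eta> \<and> (\<exists>k\<ge>m. c \<le> y k \<omega>)}"
    then obtain m k where \<omega>: "\<omega> \<in> space M" and m: "y m \<omega> \<le> \<eta>" and k: "k \<ge> m" "c \<le> y k \<omega>" by auto
    define m0 where "m0 = (LEAST m. y m \<omega> \<le> \<eta>)"
    have m0: "y m0 \<omega> \<le> \<eta>" unfolding m0_def using m by (rule LeastI)
    have m0le: "m0 \<le> m" unfolding m0_def using m by (rule Least_le)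
    have "\<forall>j<m0. \<eta> < y j \<omega>" unfolding m0_def using not_less_Least not_le by blast
    moreover have "k \<ge> m0" using m0le k by simp
    ultimately have "\<omega> \<in> C m0" unfolding C_def A_def using \<omega> m0 k by blast
    then show "\<omega> \<in> (\<Union>m. C m)" by auto
  qed
  have disj: "disjoint_family A"
  proof (unfold disjoint_family_on_def, intro ballI impI)
    fix m m' :: nat assume "m \<noteq> m'"
    have *: "A p \<inter> A q = {}" if "p < q" for p q
    proof -
      have "\<omega> \<notin> A p \<inter> A q" for \<omega>
      proof
        assume "\<omega> \<in> A p \<inter> A q"
        then have "y p \<omega> \<le> \<eta>" "\<forall>j<q. \<eta> < y j \<omega>" unfolding A_def by auto
        then show False using that by auto
      qed
      then show ?thesis by blast
    qed
    from \<open>m \<noteq> m'\<close> have "m < m' \<or> m' < m" by arith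
    then show "A m \<inter> A m' = {}" using *[of m m'] *[of m' m] by blast
  qed
  have Cb: "ennreal c * emeasure M (C m) \<le> ennreal \<eta> * emeasure M (A m)" for m
  proof -
    have "ennreal c * emeasure M (C m) \<le> (\<integral>\<^sup>+\<omega>. indicator (A m) \<omega> * ennreal (y m \<omega>) \<partial>M)"
      unfolding C_def by (rule max_inf[OF AF c])
    also have "\<dots> \<le> (\<integral>\<^sup>+\<omega>. ennreal \<eta> * indicator (A m) \<omega> \<partial>M)"
      by (intro nn_integral_mono) (auto simp: indicator_def A_def intro: ennreal_leI)
    also have "\<dots> = ennreal \<eta> * emeasure M (A m)" using AM by (simp add: nn_integral_cmult_indicator)
    finally show ?thesis .
  qed
  have "ennreal c * emeasure M {\<omega>\<in>space M. \<exists>m. y m \<omega> \<le> \<eta> \<and> (\<exists>k\<ge>m. c \<le> y k \<omega>)}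
     \<le> ennreal c * emeasure M (\<Union>m. C m)"
  proof (rule mult_left_mono[OF emeasure_mono[OF sub]])
    show "(\<Union>m. C m) \<in> sets M" using CM by auto
  qed simp
  also have "\<dots> \<le> ennreal c * (\<Sum>m. emeasure M (C m))"
    by (rule mult_left_mono[OF emeasure_subadditive_countably[OF CM]]) simp
  also have "\<dots> = (\<Sum>m. ennreal c * emeasure M (C m))" by simp
  also have "\<dots> \<le> (\<Sum>m. ennreal \<eta> * emeasure M (A m))" by (rule suminf_le[OF Cb summableI summableI])
  also have "\<dots> = ennreal \<eta> * emeasure M (\<Union>m. A m)"
  proof -
    have "range A \<subseteq> sets M" using AM by auto
    then have "(\<Sum>m. emeasure M (A m)) = emeasure M (\<Union>m. A m)" by (rule suminf_emeasure[OF _ disj])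
    then show ?thesis by (simp only: ennreal_suminf_cmult)
  qed
  also have "\<dots> \<le> ennreal \<eta> * 1"
    by (rule mult_left_mono[OF emeasure_le_1]) simp
  finally show ?thesis by (simp only: mult_1_right)
qed


lemma meas_from_enn:
  assumes "S \<in> sets M" "0 < c" "0 \<le> e" "ennreal c * emeasure M S \<le> ennreal e"
  shows "c * measure M S \<le> e"
proof -
  have "ennreal (c * measure M S) \<le> ennreal e"
    using assms by (simp add: emeasure_eq_measure ennreal_mult[symmetric])
  then show ?thesis using assms(3) by (simp add: ennreal_le_iff)
qed

lemma null_from_bounds:
  assumes S: "S \<in> sets M" and b: "\<And>K::nat. real (Suc K) * measure M S \<le> B"
  shows "S \<in> null_sets M"
proof -
  have "measure M S = 0"
  proof (rule ccontr)
    assume "measure M S \<noteq> 0"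
    then have p: "measure M S > 0" using measure_nonneg[of M S] by linarith
    obtain K :: nat where "B / measure M S < real K" using reals_Archimedean2 by blast
    then have "B < real K * measure M S" using p by (simp add: field_simps)
    also have "\<dots> \<le> real (Suc K) * measure M S" using p by (intro mult_right_mono) auto
    finally show False using b[of K] by simp
  qed
  then show ?thesis using S by (simp add: emeasure_eq_measure null_sets_def)
qed

lemma AE_bounded: "AE \<omega> in M. \<exists>K::nat. \<forall>k. y k \<omega> < real K"
proof (rule AE_I')
  define T where "T = (\<Inter>K::nat. {\<omega>\<in>space M. \<exists>k. real (Suc K) \<le> y k \<omega>})"
  have Tk: "{\<omega>\<in>space M. \<exists>k. c \<le> y k \<omega>} \<in> sets M" for c by measurable
  have TM: "T \<in> sets M" unfolding T_def using Tk by auto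
  show "T \<in> null_sets M"
  proof (rule null_from_bounds[OF TM])
    fix K :: nat
    have sub: "T \<subseteq> space M \<inter> {\<omega>\<in>space M. \<exists>k\<ge>0. real (Suc K) \<le> y k \<omega>}" unfolding T_def by auto
    have "ennreal (real (Suc K)) * emeasure M T
        \<le> ennreal (real (Suc K)) * emeasure M (space M \<inter> {\<omega>\<in>space M. \<exists>k\<ge>0. real (Suc K) \<le> y k \<omega>})"
      by (rule mult_left_mono[OF emeasure_mono[OF sub]]) (use Tk in auto)
    also have "\<dots> \<le> (\<integral>\<^sup>+\<omega>. indicator (space M) \<omega> * ennreal (y 0 \<omega>) \<partial>M)"
      by (rule max_inf[OF space_in_FF]) simp
    also have "\<dots> = (\<integral>\<^sup>+\<omega>. ennreal (\<bar>x0\<bar> powr d) \<partial>M)"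
      by (intro nn_integral_cong) (simp add: y_def X_def)
    also have "\<dots> = ennreal (\<bar>x0\<bar> powr d)" by (simp add: emeasure_space_1)
    finally show "real (Suc K) * measure M T \<le> \<bar>x0\<bar> powr d"
      by (intro meas_from_enn TM) auto
  qed
  show "{\<omega>\<in>space M. \<not> (\<exists>K::nat. \<forall>k. y k \<omega> < real K)} \<subseteq> T"
    unfolding T_def by (auto simp: not_less) (metis of_nat_Suc)
qed

lemma AE_osc: "AE \<omega> in M. \<exists>i::nat. \<forall>m. y m \<omega> \<le> 1 / real (Suc i) \<longrightarrow> (\<forall>k\<ge>m. y k \<omega> < 1 / real (Suc j))"
proof (rule AE_I')
  define c where "c = 1 / real (Suc j)"
  have c: "0 < c" by (simp add: c_def)
  define Bd where "Bd i = {\<omega>\<in>space M. \<exists>m. y m \<omega> \<le> 1 / real (Suc i) \<and> (\<exists>k\<ge>m. c \<le> y k \<omega>)}" for i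
  have BdM: "Bd i \<in> sets M" for i unfolding Bd_def by measurable
  define T where "T = (\<Inter>i. Bd i)"
  have TM: "T \<in> sets M" unfolding T_def using BdM by auto
  show "T \<in> null_sets M"
  proof (rule null_from_bounds[OF TM])
    fix K :: nat
    have "ennreal c * emeasure M T \<le> ennreal c * emeasure M (Bd K)"
      by (rule mult_left_mono[OF emeasure_mono]) (auto simp: T_def BdM)
    also have "\<dots> \<le> ennreal (1 / real (Suc K))" unfolding Bd_def by (rule bad[OF c]) simp
    finally have "c * measure M T \<le> 1 / real (Suc K)" by (intro meas_from_enn TM c) auto
    then have "real (Suc K) * (c * measure M T) \<le> real (Suc K) * (1 / real (Suc K))"
      by (intro mult_left_mono) auto
    then have "c * (real (Suc K) * measure M T) \<le> 1" by (simp add: ac_simps)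
    then show "real (Suc K) * measure M T \<le> 1 / c" using c by (simp add: field_simps)
  qed
  show "{\<omega>\<in>space M. \<not> (\<exists>i::nat. \<forall>m. y m \<omega> \<le> 1 / real (Suc i) \<longrightarrow> (\<forall>k\<ge>m. y k \<omega> < 1 / real (Suc j)))} \<subseteq> T"
    unfolding T_def Bd_def c_def by (auto simp: not_less)
qed

lemma psi_cont: "continuous_on UNIV \<psi>"
  unfolding \<psi>_def[abs_def] using d
  by (intro continuous_intros continuous_on_powr' \<phi>c) auto

lemma conv_pointwise:
  assumes lim: "(\<lambda>n. \<psi> (X n \<omega>)) \<longlonglongrightarrow> 0"
    and bd: "\<exists>K::nat. \<forall>k. y k \<omega> < real K"
    and osc: "\<forall>j. \<exists>i::nat. \<forall>m. y m \<omega> \<le> 1 / real (Suc i) \<longrightarrow> (\<forall>k\<ge>m. y k \<omega> < 1 / real (Suc j))"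
  shows "(\<lambda>n. X n \<omega>) \<longlonglongrightarrow> 0"
proof -
  obtain K :: nat where K: "\<And>k. y k \<omega> < real K" using bd by auto
  have ev: "eventually (\<lambda>n. y n \<omega> < 1 / real (Suc j)) sequentially" for j
  proof (rule ccontr)
    assume nev: "\<not> eventually (\<lambda>n. y n \<omega> < 1 / real (Suc j)) sequentially"
    then have freq: "\<forall>N. \<exists>n\<ge>N. 1 / real (Suc j) \<le> y n \<omega>"
      unfolding eventually_sequentially by (auto simp: not_less)
    obtain i where i: "\<forall>m. y m \<omega> \<le> 1 / real (Suc i) \<longrightarrow> (\<forall>k\<ge>m. y k \<omega> < 1 / real (Suc j))"
      using osc by blast
    define \<eta> where "\<eta> = 1 / real (Suc i)"
    have \<eta>: "0 < \<eta>" by (simp add: \<eta>_def)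
    have low: "\<eta> < y m \<omega>" for m
    proof (rule ccontr)
      assume "\<not> \<eta> < y m \<omega>"
      then have "\<forall>k\<ge>m. y k \<omega> < 1 / real (Suc j)" using i by (auto simp: \<eta>_def not_less)
      moreover obtain n where "n \<ge> m" "1 / real (Suc j) \<le> y n \<omega>" using freq by blast
      ultimately show False by auto
    qed
    define a where "a = \<eta> powr (1/d)"
    define b where "b = real K powr (1/d)"
    have apow: "a powr d = \<eta>" unfolding a_def using d \<eta> by (simp add: powr_powr)
    have Kpos: "0 < real K" using K[of 0] y_nn[of 0 \<omega>] by linarith
    have bpow: "b powr d = real K" unfolding b_def using d Kpos by (simp add: powr_powr)
    have a0: "0 < a" unfolding a_def using \<eta> by simp
    define S where "S = {u::real. a \<le> \<bar>u\<bar> \<and> \<bar>u\<bar> \<le> b}"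
    have inS: "X m \<omega> \<in> S" for m
    proof -
      have "a \<le> \<bar>X m \<omega>\<bar>"
      proof (rule ccontr)
        assume "\<not> a \<le> \<bar>X m \<omega>\<bar>"
        then have "\<bar>X m \<omega>\<bar> powr d < a powr d" using d by (intro powr_less_mono2) auto
        then show False using low[of m] apow by (simp add: y_def)
      qed
      moreover have "\<bar>X m \<omega>\<bar> \<le> b"
      proof (rule ccontr)
        assume "\<not> \<bar>X m \<omega>\<bar> \<le> b"
        then have "b powr d < \<bar>X m \<omega>\<bar> powr d" using d a0 b_def by (intro powr_less_mono2) auto
        then show False using K[of m] bpow by (simp add: y_def)
      qed
      ultimately show ?thesis by (simp add: S_def)
    qed
    have "S = {-b..-a} \<union> {a..b}" unfolding S_def using a0 by (auto simp: abs_if)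
    then have cS: "compact S" by (simp add: compact_Un)
    obtain u0 where u0: "u0 \<in> S" and umin: "\<forall>u\<in>S. \<psi> u0 \<le> \<psi> u"
      using continuous_attains_inf[OF cS _ continuous_on_subset[OF psi_cont]] inS[of 0] by blast
    have "u0 \<noteq> 0" using u0 a0 by (auto simp: S_def)
    then have p0: "0 < \<psi> u0" unfolding \<psi>_def using \<phi>pos by simp
    have "\<psi> u0 \<le> 0"
    proof (rule LIMSEQ_le_const[OF lim])
      show "\<exists>N. \<forall>n\<ge>N. \<psi> u0 \<le> \<psi> (X n \<omega>)" using umin inS by blast
    qed
    then show False using p0 by simp
  qed
  show ?thesis
  proof (rule LIMSEQ_I)
    fix r :: real assume r: "0 < r"
    define l where "l = r powr d"
    have l: "0 < l" using r by (simp add: l_def)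
    obtain j0 :: nat where j0: "1 / l < real j0" using reals_Archimedean2 by blast
    define j where "j = j0"
    have j: "1 / l < real (Suc j)" using j0 unfolding j_def by simp
    have jl: "1 / real (Suc j) < l" using j l by (simp add: field_simps)
    obtain N where N: "\<And>n. n \<ge> N \<Longrightarrow> y n \<omega> < 1 / real (Suc j)"
      using ev[of j] unfolding eventually_sequentially by auto
    show "\<exists>no. \<forall>n\<ge>no. norm (X n \<omega> - 0) < r"
    proof (intro exI allI impI)
      fix n assume "n \<ge> N"
      then have "y n \<omega> < 1 / real (Suc j)" by (rule N)
      then have "y n \<omega> < l" using jl by linarith
      show "norm (X n \<omega> - 0) < r"
      proof (rule ccontr)
        assume "\<not> norm (X n \<omega> - 0) < r"
        then have "r \<le> \<bar>X n \<omega>\<bar>" by simp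
        then have "r powr d \<le> \<bar>X n \<omega>\<bar> powr d" using d r by (intro powr_mono2) auto
        then show False using \<open>y n \<omega> < l\<close> by (simp add: y_def l_def)
      qed
    qed
  qed
qed

theorem AE_conv: "AE \<omega> in M. (\<lambda>n. X n \<omega>) \<longlonglongrightarrow> 0"
proof -
  have "AE \<omega> in M. \<forall>j. \<exists>i::nat. \<forall>m. y m \<omega> \<le> 1 / real (Suc i) \<longrightarrow> (\<forall>k\<ge>m. y k \<omega> < 1 / real (Suc j))"
    unfolding AE_all_countable using AE_osc by blast
  with AE_psi_lim AE_bounded show ?thesis
    by eventually_elim (rule conv_pointwise)
qed

end



lemma alg_ineq:
  fixes b f g :: real
  assumes b: "0 \<le> b" "b < 1" and fb: "f \<le> b * g^2 / 2"
  defines "\<delta> \<equiv> (1 - b) / 2"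
  defines "c \<equiv> \<delta>^2 / 3"
  shows "\<delta> * f - \<delta> * (1 - \<delta>) / 2 * g^2 \<le> - c * (\<bar>f\<bar> + g^2)"
proof -
  have d0: "0 < \<delta>" "\<delta> \<le> 1/2" using b by (auto simp: \<delta>_def)
  have c0: "0 \<le> c" by (simp add: c_def)
  have g2: "0 \<le> g^2" by simp
  show ?thesis
  proof (cases "f \<ge> 0")
    case True
    have K1: "(\<delta> + c) * b / 2 + c \<le> \<delta> * (1 - \<delta>) / 2"
    proof -
      have bb: "b = 1 - 2 * \<delta>" by (simp add: \<delta>_def field_simps)
      have "(\<delta> + c) * b / 2 + c = (\<delta> - \<delta>^2 - 2 * c * \<delta>) / 2"
        unfolding bb c_def by (simp add: field_simps power2_eq_square)
      also have "\<dots> \<le> (\<delta> - \<delta>^2) / 2" using c0 d0 by simp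
      also have "\<dots> = \<delta> * (1 - \<delta>) / 2" by (simp add: algebra_simps power2_eq_square)
      finally show ?thesis .
    qed
    have "(\<delta> + c) * f \<le> (\<delta> + c) * (b * g^2 / 2)" using fb d0 c0 by (intro mult_left_mono) auto
    then have "\<delta> * f + c * f + c * g^2 \<le> g^2 * ((\<delta> + c) * b / 2 + c)" by (simp add: algebra_simps)
    also have "\<dots> \<le> g^2 * (\<delta> * (1 - \<delta>) / 2)" using K1 by (intro mult_left_mono) auto
    finally show ?thesis using True by (simp add: algebra_simps)
  next
    case False
    have cd: "c \<le> \<delta>" unfolding c_def using d0 by (simp add: power2_eq_square)
    have cd2: "c \<le> \<delta> * (1 - \<delta>) / 2" unfolding c_def using d0 by (simp add: power2_eq_square field_simps)
    have "(\<delta> - c) * f \<le> 0" using False cd by (simp add: mult_nonneg_nonpos)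
    then have e1: "\<delta> * f - c * f \<le> 0" by (simp add: algebra_simps)
    have e2: "c * g^2 \<le> \<delta> * (1 - \<delta>) / 2 * g^2" using cd2 by (intro mult_right_mono) auto
    have e3: "- c * (\<bar>f\<bar> + g^2) = c * f - c * g^2" using False by (simp add: algebra_simps)
    show ?thesis unfolding e3 using e1 e2 by linarith
  qed
qed



lemma final_bound:
  fixes fu gu h \<delta> c K :: real
  assumes h: "0 < h" "h \<le> 1" and fu: "\<bar>fu\<bar> \<le> 1" and gu: "\<bar>gu\<bar> \<le> 1" and K: "1 \<le> K"
    and hs: "48 * sqrt h * K \<le> c / 2"
    and alg: "\<delta> * fu - \<delta> * (1 - \<delta>) / 2 * gu^2 \<le> - c * (\<bar>fu\<bar> + gu^2)"
    and d: "0 < \<delta>" "\<delta> \<le> 1/2" and c: "0 \<le> c"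
  shows "1 + \<delta> * (h * fu) - \<delta> * (1 - \<delta>) / 2 * ((h * fu)^2 + (sqrt h * gu)^2)
     + 48 * (\<bar>h * fu\<bar>^3 + \<bar>sqrt h * gu\<bar>^3 * K) + h * c / 2 * (\<bar>fu\<bar> + gu^2) \<le> 1"
proof -
  define s where "s = sqrt h"
  have s0: "0 < s" using h by (simp add: s_def)
  have hs2: "h = s^2" using h by (simp add: s_def)
  have s1: "s \<le> 1" using h by (simp add: s_def)
  have hles: "h \<le> s" unfolding hs2 using s0 s1 by (simp add: power2_eq_square mult_left_le_one_le)
  define \<Phi> where "\<Phi> = \<bar>fu\<bar> + gu^2"
  have \<Phi>0: "0 \<le> \<Phi>" by (simp add: \<Phi>_def)
  have T1: "0 \<le> \<delta> * (1 - \<delta>) / 2 * (h * fu)^2" using d by simp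
  have T2: "(sqrt h * gu)^2 = h * gu^2" using h by (simp add: power_mult_distrib)
  have T3: "\<bar>h * fu\<bar>^3 \<le> h * s * \<bar>fu\<bar>"
  proof -
    have "\<bar>h * fu\<bar>^3 = h^3 * \<bar>fu\<bar>^3" using h by (simp add: abs_mult power_mult_distrib)
    also have "\<dots> \<le> (h * s) * \<bar>fu\<bar>"
    proof (rule mult_mono)
      have "h^2 \<le> h" using h by (simp add: power2_eq_square mult_left_le_one_le)
      then have "h^2 \<le> s" using hles by linarith
      then have "h * h^2 \<le> h * s" using h by (intro mult_left_mono) auto
      then show "h^3 \<le> h * s" by (simp add: power3_eq_cube power2_eq_square)
      have "\<bar>fu\<bar>^3 = \<bar>fu\<bar> * \<bar>fu\<bar>^2" by (simp add: power3_eq_cube power2_eq_square)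
      also have "\<dots> \<le> \<bar>fu\<bar> * 1" using fu by (intro mult_left_mono) (auto simp: abs_square_le_1)
      finally show "\<bar>fu\<bar>^3 \<le> \<bar>fu\<bar>" by simp
    qed (use h s0 in auto)
    finally show ?thesis .
  qed
  have T4: "\<bar>sqrt h * gu\<bar>^3 \<le> h * s * gu^2"
  proof -
    have "\<bar>sqrt h * gu\<bar>^3 = s^3 * \<bar>gu\<bar>^3" using s0 by (simp add: s_def abs_mult power_mult_distrib)
    also have "\<dots> = (h * s) * (\<bar>gu\<bar> * gu^2)" unfolding hs2 by (simp add: power3_eq_cube power2_eq_square)
    also have "\<dots> \<le> (h * s) * (1 * gu^2)" using gu h s0 by (intro mult_left_mono mult_right_mono) auto
    finally show ?thesis by simp
  qed
  have T5: "48 * (\<bar>h * fu\<bar>^3 + \<bar>sqrt h * gu\<bar>^3 * K) \<le> h * (c / 2) * \<Phi>"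
  proof -
    have "\<bar>sqrt h * gu\<bar>^3 * K \<le> h * s * gu^2 * K" using T4 K by (intro mult_right_mono) auto
    then have "\<bar>h * fu\<bar>^3 + \<bar>sqrt h * gu\<bar>^3 * K \<le> h * s * \<bar>fu\<bar> + h * s * gu^2 * K" using T3 by linarith
    also have "\<dots> \<le> h * s * K * \<bar>fu\<bar> + h * s * K * gu^2"
    proof -
      have "h * s * \<bar>fu\<bar> \<le> h * s * K * \<bar>fu\<bar>"
        using K h s0 mult_left_mono[of 1 K "h * s * \<bar>fu\<bar>"] by (simp add: ac_simps)
      then show ?thesis by (simp add: ac_simps)
    qed
    also have "\<dots> = h * (s * K) * \<Phi>" by (simp add: \<Phi>_def algebra_simps)
    finally have "48 * (\<bar>h * fu\<bar>^3 + \<bar>sqrt h * gu\<bar>^3 * K) \<le> h * (48 * s * K) * \<Phi>" by simp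
    also have "\<dots> \<le> h * (c / 2) * \<Phi>"
      using hs h \<Phi>0 by (intro mult_right_mono mult_left_mono) (auto simp: s_def)
    finally show ?thesis .
  qed
  have T6: "\<delta> * (h * fu) - \<delta> * (1 - \<delta>) / 2 * (h * gu^2) \<le> - h * c * \<Phi>"
  proof -
    have "\<delta> * (h * fu) - \<delta> * (1 - \<delta>) / 2 * (h * gu^2) = h * (\<delta> * fu - \<delta> * (1 - \<delta>) / 2 * gu^2)"
      by (simp add: algebra_simps)
    also have "\<dots> \<le> h * (- c * \<Phi>)" unfolding \<Phi>_def using alg h by (intro mult_left_mono) auto
    finally show ?thesis by simp
  qed
  have "\<delta> * (1 - \<delta>) / 2 * ((h * fu)^2 + (sqrt h * gu)^2)
      = \<delta> * (1 - \<delta>) / 2 * (h * fu)^2 + \<delta> * (1 - \<delta>) / 2 * (h * gu^2)" unfolding T2 by (simp add: algebra_simps)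
  moreover have "h * c / 2 * (\<bar>fu\<bar> + gu^2) = h * (c / 2) * \<Phi>" by (simp add: \<Phi>_def)
  moreover have "h * (c / 2) * \<Phi> + h * (c / 2) * \<Phi> = h * c * \<Phi>" by (simp add: algebra_simps)
  ultimately show ?thesis using T1 T5 T6 by linarith
qed


lemma xseq_xs: "xseq f g \<xi> h x0 n \<omega> = xs (\<lambda>u t. 1 + h * f u + sqrt h * g u * t) \<xi> x0 n \<omega>"
  by (induction n) simp_all

theorem theorem2:
  fixes M :: "'a measure" and \<xi> :: "nat \<Rightarrow> 'a \<Rightarrow> real"
    and p :: "nat \<Rightarrow> real \<Rightarrow> real" and f g :: "real \<Rightarrow> real"
  assumes "prob_space M"
    and indep: "prob_space.indep_vars M (\<lambda>_. borel) \<xi> {1..}"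
    and rv: "\<And>n. n \<ge> 1 \<Longrightarrow> \<xi> n \<in> borel_measurable M"
    and int1: "\<And>n. n \<ge> 1 \<Longrightarrow> integrable M (\<xi> n)"
    and mean0: "\<And>n. n \<ge> 1 \<Longrightarrow> (\<integral>\<omega>. \<xi> n \<omega> \<partial>M) = 0"
    and int2: "\<And>n. n \<ge> 1 \<Longrightarrow> integrable M (\<lambda>\<omega>. (\<xi> n \<omega>)\<^sup>2)"
    and var1: "\<And>n. n \<ge> 1 \<Longrightarrow> (\<integral>\<omega>. (\<xi> n \<omega>)\<^sup>2 \<partial>M) = 1"
    and int3: "\<And>n. n \<ge> 1 \<Longrightarrow> integrable M (\<lambda>\<omega>. \<bar>\<xi> n \<omega>\<bar> ^ 3)"
    and mom3: "\<exists>C. \<forall>n\<ge>1. (\<integral>\<omega>. \<bar>\<xi> n \<omega>\<bar> ^ 3 \<partial>M) \<le> C"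
    and dens_nonneg: "\<And>n x. n \<ge> 1 \<Longrightarrow> p n x \<ge> 0"
    and dens: "\<And>n. n \<ge> 1 \<Longrightarrow> distributed M lborel (\<xi> n) (\<lambda>x. ennreal (p n x))"
    and tail: "\<forall>\<epsilon>>0. \<exists>R. \<forall>n\<ge>1. \<forall>x. \<bar>x\<bar> > R \<longrightarrow> \<bar>x ^ 3 * p n x\<bar> < \<epsilon>"
    and contf: "continuous_on UNIV f" and contg: "continuous_on UNIV g"
    and fbd: "\<And>u. \<bar>f u\<bar> \<le> 1" and gbd: "\<And>u. \<bar>g u\<bar> \<le> 1"
    and sup_cond: "\<exists>\<beta><1. \<forall>u. u \<noteq> 0 \<longrightarrow>
        (if g u = 0 then f u < 0 else 2 * f u / (g u)\<^sup>2 \<le> \<beta>)"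
  shows "\<exists>h0>0. \<forall>h. 0 < h \<and> h < h0 \<longrightarrow> (\<forall>x0::real.
           AE \<omega> in M. (\<lambda>n. xseq f g \<xi> h x0 n \<omega>) \<longlonglongrightarrow> 0)"
proof -
  interpret P: prob_space M by (rule assms(1))
  obtain \<beta> where \<beta>: "\<beta> < 1" and hb: "\<forall>u. u \<noteq> 0 \<longrightarrow>
        (if g u = 0 then f u < 0 else 2 * f u / (g u)\<^sup>2 \<le> \<beta>)" using sup_cond by blast
  obtain C where C: "\<forall>n\<ge>1. (\<integral>\<omega>. \<bar>\<xi> n \<omega>\<bar> ^ 3 \<partial>M) \<le> C" using mom3 by blast
  define b where "b = max \<beta> 0"
  define \<delta> where "\<delta> = (1 - b) / 2"
  define c where "c = \<delta>^2 / 3"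
  define K where "K = max C 1"
  define h0 where "h0 = (c / (96 * K))^2"
  have b0: "0 \<le> b" "b < 1" using \<beta> by (auto simp: b_def)
  have d0: "0 < \<delta>" "\<delta> \<le> 1/2" using b0 by (auto simp: \<delta>_def)
  have "\<delta> * \<delta> \<le> 1 * 1" using d0 by (intro mult_mono) auto
  then have c0: "0 < c" "c \<le> 1" using d0 by (auto simp: c_def power2_eq_square)
  have K1: "1 \<le> K" by (simp add: K_def)
  have fb: "f u \<le> b * (g u)^2 / 2" if "u \<noteq> 0" for u
  proof (cases "g u = 0")
    case True then show ?thesis using hb that by auto
  next
    case False
    then have g2: "0 < (g u)^2" by simp
    have "2 * f u / (g u)^2 \<le> b" using hb that False by (auto simp: b_def)
    then have "2 * f u \<le> b * (g u)^2" using g2 by (simp add: divide_le_eq)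
    then show ?thesis by simp
  qed
  have h00: "0 < c / (96 * K)" using c0 K1 by simp
  have h01: "c / (96 * K) \<le> 1" using c0 K1 by (simp add: divide_le_eq)
  show ?thesis
  proof (intro exI conjI allI impI)
    show "0 < h0" unfolding h0_def using h00 by (simp only: zero_less_power)
    fix h x0 :: real assume h: "0 < h \<and> h < h0"
    have h0le: "h0 \<le> 1" unfolding h0_def using h00 h01 by (simp add: power_le_one)
    have h1: "h \<le> 1" using h h0le by simp
    have "sqrt h < sqrt h0" using h by simp
    also have "sqrt h0 = c / (96 * K)" unfolding h0_def using h00 by (simp only: real_sqrt_abs abs_of_pos)
    finally have "48 * sqrt h * K \<le> 48 * (c / (96 * K)) * K" using K1 by (intro mult_right_mono) auto
    also have "\<dots> = c / 2" using K1 by (simp add: field_simps)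
    finally have hs: "48 * sqrt h * K \<le> c / 2" .
    define F where "F = (\<lambda>u t. 1 + h * f u + sqrt h * g u * t)"
    define \<phi> where "\<phi> = (\<lambda>u. \<bar>f u\<bar> + (g u)^2)"
    define \<kappa> where "\<kappa> = h * c / 2"
    have fm[measurable]: "f \<in> borel_measurable borel" by (intro borel_measurable_continuous_onI contf)
    have gm[measurable]: "g \<in> borel_measurable borel" by (intro borel_measurable_continuous_onI contg)
    interpret S: stab M \<xi> F x0 \<delta> \<kappa> \<phi>
    proof (rule stab.intro)
      show "prob_space M" by (rule assms(1))
      show "prob_space.indep_vars M (\<lambda>_. borel) \<xi> {1..}" by (rule indep)
      show "(\<lambda>p. F (fst p) (snd p)) \<in> borel_measurable (borel \<Otimes>\<^sub>M borel)" unfolding F_def by measurable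
      show "0 < \<delta>" by (rule d0)
      show "0 < \<kappa>" unfolding \<kappa>_def using h c0 by simp
      show "continuous_on UNIV \<phi>" unfolding \<phi>_def by (intro continuous_intros contf contg)
      show "\<And>u. 0 \<le> \<phi> u" unfolding \<phi>_def by simp
      show "\<And>u. u \<noteq> 0 \<Longrightarrow> 0 < \<phi> u"
      proof -
        fix u :: real assume u: "u \<noteq> 0"
        show "0 < \<phi> u"
        proof (cases "g u = 0")
          case True then have "f u < 0" using hb u by auto
          then show ?thesis unfolding \<phi>_def using True by simp
        next
          case False then have "0 < (g u)^2" by simp
          then show ?thesis unfolding \<phi>_def by (simp add: add_nonneg_pos)
        qed
      qed
      fix n :: nat and u :: real assume n: "n \<ge> 1" and u: "u \<noteq> 0"
      have m3: "(\<integral>\<omega>. \<bar>\<xi> n \<omega>\<bar> ^ 3 \<partial>M) \<le> K" using C n by (auto simp: K_def intro: order.trans)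
      define R where "R = 1 + \<delta> * (h * f u) - \<delta> * (1 - \<delta>) / 2 * ((h * f u)^2 + (sqrt h * g u)^2)
         + 48 * (\<bar>h * f u\<bar>^3 + \<bar>sqrt h * g u\<bar>^3 * K)"
      have EB: "(\<integral>\<^sup>+\<omega>. ennreal (\<bar>F u (\<xi> n \<omega>)\<bar> powr \<delta>) \<partial>M) \<le> ennreal R"
        using expect_bound[OF assms(1) rv[OF n] int1[OF n] int2[OF n] int3[OF n] mean0[OF n] var1[OF n] m3 d0,
          of "h * f u" "sqrt h * g u"]
        unfolding F_def R_def by simp
      have alg: "\<delta> * f u - \<delta> * (1 - \<delta>) / 2 * (g u)^2 \<le> - c * (\<bar>f u\<bar> + (g u)^2)"
        using alg_ineq[OF b0 fb[OF u]] unfolding \<delta>_def c_def by simp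
      have RB: "R + \<kappa> * \<phi> u \<le> 1"
        using final_bound[OF _ h1 fbd gbd K1 hs alg d0 less_imp_le[OF c0(1)]] h
        unfolding R_def \<kappa>_def \<phi>_def by simp
      have kp: "0 \<le> \<kappa> * \<phi> u" unfolding \<kappa>_def \<phi>_def using h c0 by simp
      have "ennreal R + ennreal (\<kappa> * \<phi> u) \<le> 1"
      proof (cases "0 \<le> R")
        case True
        then have "ennreal R + ennreal (\<kappa> * \<phi> u) = ennreal (R + \<kappa> * \<phi> u)" using kp by (simp add: ennreal_plus)
        then show ?thesis using RB by (simp add: ennreal_le_1)
      next
        case False
        then have "ennreal R = 0" by (simp add: ennreal_eq_0_iff)
        moreover have "\<kappa> * \<phi> u \<le> 1"
        proof -
          have "(g u)^2 \<le> 1" using gbd[of u] by (simp add: abs_square_le_1)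
          then have p2: "\<phi> u \<le> 2" unfolding \<phi>_def using fbd[of u] by simp
          have "h * c \<le> 1 * 1" using h1 c0 h by (intro mult_mono) auto
          then have k2: "\<kappa> \<le> 1/2" unfolding \<kappa>_def by simp
          have "\<kappa> * \<phi> u \<le> (1/2) * 2" using k2 p2 kp h c0
            by (intro mult_mono) (auto simp: \<kappa>_def \<phi>_def)
          then show ?thesis by simp
        qed
        ultimately show ?thesis by (simp add: ennreal_le_1)
      qed
      then show "(\<integral>\<^sup>+\<omega>. ennreal (\<bar>F u (\<xi> n \<omega>)\<bar> powr \<delta>) \<partial>M) + ennreal (\<kappa> * \<phi> u) \<le> 1"
        using EB by (meson add_right_mono order_trans)
    qed
    have "AE \<omega> in M. (\<lambda>n. S.X n \<omega>) \<longlonglongrightarrow> 0" by (rule S.AE_conv)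
    moreover have "S.X n \<omega> = xseq f g \<xi> h x0 n \<omega>" for n \<omega>
      unfolding S.X_def unfolding xseq_xs F_def ..
    ultimately show "AE \<omega> in M. (\<lambda>n. xseq f g \<xi> h x0 n \<omega>) \<longlonglongrightarrow> 0" by simp
  qed
qed


end
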